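(* Assume the Rainbow Conjecture (RC) stated in the context holds. Then every finite digraph $H$ with no loops and no digons has a vertex $v$ with $|N^+_2(v)| \geq |N^+(v)|$.
   Context: All digraphs are finite. A digon is a pair of edges $(u,v),(v,u)$. For a vertex $v$ of a digraph, $N^+(v)$ is the set of vertices at directed out-distance exactly $1$ from $v$, and $N^+_2(v)$ is the set of vertices at directed out-distance exactly $2$ from $v$ (distance $=$ length of a shortest directed path). Rainbow setting: let $G$ be a finite digraph on vertex set $V$ with no loops and no parallel edges (digons allowed), let $k \geq 1$ and $E_1,\dots,E_k \subseteq E(G)$. Each edge $e$ gets the label set $S_e=\{i : e \in E_i\}$, and $G_i=(V,E_i)$. A directed path or directed cycle $P$ in $G$ is rainbow if there is an injective map $\ell: E(P)\to\{1,\dots,k\}$ with $\ell(e)\in S_e$ for every $e \in E(P)$. The Rainbow Conjecture (RC) asserts: for every such $G$, $k$ and $E_1,\dots,E_k$, either $G$ contains a rainbow directed cycle, or there is a vertex $v$ such that the number of vertices $w \neq v$ for which there is a rainbow directed path from $v$ to $w$ is at least $\sum_{i=1}^k \delta^+_{G_i}(v)$, where $\delta^+_{G_i}(v)$ is the out-degree of $v$ in $G_i$. *)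

theory Defs
  imports Main
begin

text \<open>A finite digraph: finite vertex set V, edge set E \<subseteq> V \<times> V, no loops.
  Parallel edges are impossible since E is a set; digons are allowed.\<close>
definition digraph :: "'a set \<Rightarrow> ('a \<times> 'a) set \<Rightarrow> bool" where
  "digraph V E \<longleftrightarrow> finite V \<and> E \<subseteq> V \<times> V \<and> (\<forall>u. (u, u) \<notin> E)"

definition rainbow_path ::
  "('a \<times> 'a) set \<Rightarrow> nat \<Rightarrow> (nat \<Rightarrow> ('a \<times> 'a) set) \<Rightarrow> 'a \<Rightarrow> 'a \<Rightarrow> bool" where
  "rainbow_path E k Es v w \<longleftrightarrow>
     (\<exists>ps. length ps \<ge> 2 \<and> hd ps = v \<and> last ps = w \<and> distinct ps \<and>
        (\<forall>i < length ps - 1. (ps ! i, ps ! Suc i) \<in> E) \<and>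
        (\<exists>l. inj_on l {..<length ps - 1} \<and>
             (\<forall>i < length ps - 1. l i \<in> {1..k} \<and> (ps ! i, ps ! Suc i) \<in> Es (l i))))"

text \<open>Rainbow directed cycle: distinct vertices cs = [c0, ..., c(n-1)], n \<ge> 2
  (digons count as cycles of length 2), edges (c i, c ((i+1) mod n)) in E,
  with an injective admissible labelling of its n edges.\<close>
definition rainbow_cycle ::
  "('a \<times> 'a) set \<Rightarrow> nat \<Rightarrow> (nat \<Rightarrow> ('a \<times> 'a) set) \<Rightarrow> bool" where
  "rainbow_cycle E k Es \<longleftrightarrow>
     (\<exists>cs. length cs \<ge> 2 \<and> distinct cs \<and>
        (\<forall>i < length cs. (cs ! i, cs ! ((i + 1) mod length cs)) \<in> E) \<and>
        (\<exists>l. inj_on l {..<length cs} \<and>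
             (\<forall>i < length cs. l i \<in> {1..k} \<and>
                 (cs ! i, cs ! ((i + 1) mod length cs)) \<in> Es (l i))))"

definition outdeg :: "('a \<times> 'a) set \<Rightarrow> 'a \<Rightarrow> nat" where
  "outdeg F v = card {w. (v, w) \<in> F}"

definition RC_on :: "'v itself \<Rightarrow> bool" where
  "RC_on _ \<longleftrightarrow>
     (\<forall>(V :: 'v set) E k Es.
        digraph V E \<and> V \<noteq> {} \<and> k \<ge> 1 \<and> (\<forall>i \<in> {1..k}. Es i \<subseteq> E) \<longrightarrow>
        rainbow_cycle E k Es \<or>
        (\<exists>v \<in> V. card {w \<in> V. w \<noteq> v \<and> rainbow_path E k Es v w}
                    \<ge> (\<Sum>i = 1..k. outdeg (Es i) v)))"

definition out_nbhd :: "('a \<times> 'a) set \<Rightarrow> 'a \<Rightarrow> 'a set" where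
  "out_nbhd E v = {w. w \<noteq> v \<and> (v, w) \<in> E}"

definition second_out_nbhd :: "('a \<times> 'a) set \<Rightarrow> 'a \<Rightarrow> 'a set" where
  "second_out_nbhd E v =
     {w. w \<noteq> v \<and> (v, w) \<notin> E \<and> (\<exists>u. (v, u) \<in> E \<and> (u, w) \<in> E)}"

end

theory Submission
  imports Defs
begin

lemma spec4: "\<forall>a b c d. P a b c d \<Longrightarrow> P a b c d" by blast

lemma inj_bound2:
  fixes l :: "nat \<Rightarrow> nat" and n :: nat
  assumes "inj_on l {..<n}" "\<forall>i<n. l i \<in> {1..(2::nat)}"
  shows "n \<le> 2"
proof -
  have "l ` {..<n} \<subseteq> {1..2}" using assms(2) by auto
  hence "card (l ` {..<n}) \<le> card {1..(2::nat)}" by (intro card_mono) auto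
  thus ?thesis using card_image[OF assms(1)] by simp
qed

theorem mainTheorem1:
  fixes V :: "'a set" and E :: "('a \<times> 'a) set"
  assumes RC: "RC_on TYPE(nat)"
    and H: "digraph V E" and nonempty: "V \<noteq> {}"
    and no_digons: "\<forall>u v. (u, v) \<in> E \<longrightarrow> (v, u) \<notin> E"
  shows "\<exists>v \<in> V. card (second_out_nbhd E v) \<ge> card (out_nbhd E v)"
proof -
  have finV: "finite V" and EV: "E \<subseteq> V \<times> V" and noloop: "\<forall>u. (u, u) \<notin> E"
    using H unfolding digraph_def by auto
  obtain f :: "'a \<Rightarrow> nat" and n where fV: "f ` V = {i. i < n}" and inj: "inj_on f V"
    using finite_imp_inj_to_nat_seg[OF finV] by blast
  define F where "F = map_prod f f ` E"
  define Vn where "Vn = f ` V"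
  have memF: "(a, b) \<in> F \<longleftrightarrow> (\<exists>x y. (x, y) \<in> E \<and> a = f x \<and> b = f y)" for a b
    unfolding F_def by force
  have injE: "x = y" if "x \<in> V" "y \<in> V" "f x = f y" for x y
    using inj that by (auto dest: inj_onD)
  have dg: "digraph Vn F"
    unfolding digraph_def Vn_def
  proof (intro conjI allI)
    show "finite (f ` V)" using finV by simp
    show "F \<subseteq> f ` V \<times> f ` V" unfolding F_def using EV by auto
    fix u show "(u, u) \<notin> F"
    proof
      assume "(u, u) \<in> F"
      then obtain x y where "(x, y) \<in> E" "u = f x" "u = f y" using memF by blast
      moreover hence "x \<in> V" "y \<in> V" using EV by auto
      ultimately show False using injE noloop by metis
    qed
  qed
  have norc: "\<not> rainbow_cycle F 2 (\<lambda>_. F)"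
  proof
    assume "rainbow_cycle F 2 (\<lambda>_. F)"
    then obtain cs and l :: "nat \<Rightarrow> nat" where len: "length cs \<ge> 2" and dist: "distinct cs"
      and ed: "\<forall>i < length cs. (cs ! i, cs ! ((i + 1) mod length cs)) \<in> F"
      and il: "inj_on l {..<length cs}" and lr: "\<forall>i < length cs. l i \<in> {1..2}"
      unfolding rainbow_cycle_def by blast
    have "length cs \<le> 2" using inj_bound2[OF il] lr by blast
    hence l2: "length cs = 2" using len by simp
    have "(cs ! 0, cs ! 1) \<in> F" using ed[rule_format, of 0] l2 by simp
    then obtain x y where xy: "(x, y) \<in> E" "cs ! 0 = f x" "cs ! 1 = f y" using memF by blast
    have "(cs ! 1, cs ! 0) \<in> F" using ed[rule_format, of 1] l2 by simp
    then obtain x' y' where xy': "(x', y') \<in> E" "cs ! 1 = f x'" "cs ! 0 = f y'" using memF by blast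
    have V4: "x \<in> V" "y \<in> V" "x' \<in> V" "y' \<in> V" using xy xy' EV by auto
    have "x = y'" "y = x'" using injE V4 xy xy' by metis+
    thus False using xy xy' no_digons by blast
  qed
  have "Vn \<noteq> {}" using nonempty Vn_def by simp
  then obtain v' where v': "v' \<in> Vn"
    and big: "card {w \<in> Vn. w \<noteq> v' \<and> rainbow_path F 2 (\<lambda>_. F) v' w}
                    \<ge> (\<Sum>i = 1..(2::nat). outdeg ((\<lambda>_. F) i) v')"
  proof -
    have "\<forall>(V :: nat set) E k Es.
        digraph V E \<and> V \<noteq> {} \<and> k \<ge> 1 \<and> (\<forall>i \<in> {1..k}. Es i \<subseteq> E) \<longrightarrow>
        rainbow_cycle E k Es \<or>
        (\<exists>v \<in> V. card {w \<in> V. w \<noteq> v \<and> rainbow_path E k Es v w}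
                    \<ge> (\<Sum>i = 1..k. outdeg (Es i) v))" using RC unfolding RC_on_def by blast
    hence "digraph Vn F \<and> Vn \<noteq> {} \<and> (2::nat) \<ge> 1 \<and> (\<forall>i \<in> {1..2::nat}. (\<lambda>_. F) i \<subseteq> F) \<longrightarrow>
        rainbow_cycle F 2 (\<lambda>_. F) \<or>
        (\<exists>v \<in> Vn. card {w \<in> Vn. w \<noteq> v \<and> rainbow_path F 2 (\<lambda>_. F) v w}
                    \<ge> (\<Sum>i = 1..(2::nat). outdeg ((\<lambda>_. F) i) v))" by (rule spec4)
    moreover have "digraph Vn F \<and> Vn \<noteq> {} \<and> (2::nat) \<ge> 1 \<and> (\<forall>i \<in> {1..2::nat}. (\<lambda>_. F) i \<subseteq> F)"
      using dg \<open>Vn \<noteq> {}\<close> by simp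
    ultimately show ?thesis using norc that by blast
  qed
  obtain v where vV: "v \<in> V" and vv: "v' = f v" using v' Vn_def by blast
  define N1 where "N1 = out_nbhd E v"
  define N2 where "N2 = second_out_nbhd E v"
  have N1V: "N1 \<subseteq> V" unfolding N1_def out_nbhd_def using EV by auto
  have N2V: "N2 \<subseteq> V" unfolding N2_def second_out_nbhd_def using EV by auto
  have fin1: "finite N1" "finite N2" using N1V N2V finV finite_subset by auto
  have N1eq: "N1 = {w. (v, w) \<in> E}" unfolding N1_def out_nbhd_def using noloop by auto
  have "{w. (f v, w) \<in> F} = f ` N1"
  proof (rule set_eqI, rule iffI)
    fix w assume "w \<in> {w. (f v, w) \<in> F}"
    then obtain x y where "(x, y) \<in> E" "f v = f x" "w = f y" using memF by auto
    moreover hence "x = v" using injE EV vV by blast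
    ultimately show "w \<in> f ` N1" using N1eq by auto
  next
    fix w assume "w \<in> f ` N1" thus "w \<in> {w. (f v, w) \<in> F}" using N1eq memF by auto
  qed
  hence od: "outdeg F v' = card N1"
    unfolding outdeg_def vv using card_image inj_on_subset[OF inj N1V] by metis
  have sub: "{w \<in> Vn. w \<noteq> v' \<and> rainbow_path F 2 (\<lambda>_. F) v' w} \<subseteq> f ` (N1 \<union> N2)"
  proof
    fix w assume "w \<in> {w \<in> Vn. w \<noteq> v' \<and> rainbow_path F 2 (\<lambda>_. F) v' w}"
    hence wne: "w \<noteq> f v" and rp: "rainbow_path F 2 (\<lambda>_. F) (f v) w" using vv by auto
    then obtain ps and l :: "nat \<Rightarrow> nat" where len: "length ps \<ge> 2" and hd: "hd ps = f v" and lst: "last ps = w"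
      and dist: "distinct ps" and ed: "\<forall>i < length ps - 1. (ps ! i, ps ! Suc i) \<in> F"
      and il: "inj_on l {..<length ps - 1}" and lr: "\<forall>i < length ps - 1. l i \<in> {1..2}"
      unfolding rainbow_path_def by blast
    have "length ps - 1 \<le> 2" using inj_bound2[OF il] lr by blast
    hence cases: "length ps = 2 \<or> length ps = 3" using len by linarith
    have p0: "ps ! 0 = f v" using hd len by (cases ps) auto
    have pl: "ps ! (length ps - 1) = w" using lst len by (metis last_conv_nth list.size(3) not_numeral_le_zero)
    show "w \<in> f ` (N1 \<union> N2)"
    proof (cases "length ps = 2")
      case True
      have "(ps ! 0, ps ! 1) \<in> F" using ed True by auto
      then obtain x y where xy: "(x, y) \<in> E" "f v = f x" "w = f y"
        using memF p0 pl True by auto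
      hence "x = v" using injE EV vV by blast
      thus ?thesis using xy N1eq by auto
    next
      case False
      hence l3: "length ps = 3" using cases by simp
      have "(ps ! 0, ps ! 1) \<in> F" using ed l3 by auto
      then obtain x y where xy: "(x, y) \<in> E" "f v = f x" "ps ! 1 = f y"
        using memF p0 by auto
      have "(ps ! 1, ps ! Suc 1) \<in> F" using ed[rule_format, of 1] l3 by simp
      hence "(ps ! 1, ps ! 2) \<in> F" by (simp add: numeral_2_eq_2)
      then obtain x' y' where xy': "(x', y') \<in> E" "ps ! 1 = f x'" "w = f y'"
        using memF pl l3 by auto
      have "x = v" using injE EV vV xy by blast
      moreover have "y \<in> V" "x' \<in> V" using EV xy(1) xy'(1) by auto
      moreover have "y = x'" using injE[OF calculation(2,3)] xy(3) xy'(2) by simp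
      moreover have "y' \<noteq> v" using wne xy' by auto
      ultimately have "y' \<in> N1 \<union> N2"
        using xy xy' unfolding N1_def N2_def out_nbhd_def second_out_nbhd_def by auto
      thus ?thesis using xy' by auto
    qed
  qed
  have "card {w \<in> Vn. w \<noteq> v' \<and> rainbow_path F 2 (\<lambda>_. F) v' w} \<le> card (f ` (N1 \<union> N2))"
    using sub fin1 by (intro card_mono) auto
  also have "\<dots> \<le> card (N1 \<union> N2)" using card_image_le fin1 by blast
  also have "\<dots> \<le> card N1 + card N2" by (rule card_Un_le)
  finally have "2 * card N1 \<le> card N1 + card N2" using big od by simp
  hence "card N1 \<le> card N2" by simp
  thus ?thesis using vV N1_def N2_def by blast
qed

end
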